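(* Let $S$ be a topological semigroup with an open right unit $e$. For every open neighborhood $U\subset S$ of $e$ there is a premetric $d:S\times S\to[0,1]$ such that: (1) $\overline d=\overline d^\circ\le d$; (2) $d$ is a left-subinvariant $\overline{\mathsf{dist}}$-continuous quasi-pseudometric with open balls on $S$; (3) $\overline d=\overline d^\circ$ is a left-subinvariant right-continuous $\overline{\mathsf{dist}}$-continuous quasi-pseudometric on $S$; (4) $B_d(x,1)\subset xU$ and $B_{\overline d}(x,1)\subset\mathrm{int}\,\overline{xU}$ for every $x\in S$; (5) if $e$ is a balanced point of $S$, then the quasi-pseudometrics $d$ and $\overline d=\overline d^\circ$ are subinvariant.
   Context: A topological semigroup is a topological space with a continuous associative multiplication. $e$ is a right unit if $xe=x$ for all $x$; an open right unit if moreover $xV$ is a neighborhood of $x$ for every neighborhood $V$ of $e$ and every $x\in S$. A point $e$ is balanced if it has a neighborhood base of open sets $V$ with $xV=Vx$ for all $x\in S$. A premetric is $d:S\times S\to[0,\infty)$ with $d(x,x)=0$; a quasi-pseudometric also satisfies $d(x,z)\le d(x,y)+d(y,z)$. $d$ is left-subinvariant if $d(zx,zy)\le d(x,y)$, right-subinvariant if $d(xz,yz)\le d(x,y)$, subinvariant if both, for all $x,y,z$. $B_d(x,\varepsilon)=\{y:d(x,y)<\varepsilon\}$, $B_d(A,\varepsilon)=\bigcup_{a\in A}B_d(a,\varepsilon)$. $d$ has open balls if all $B_d(x,\varepsilon)$ are open; right-continuous if $y\mapsto d(x,y)$ is continuous for each $x$. For non-empty $A$: $\overline d_A(x)=\inf\{\varepsilon>0:x\in\overline{B_d(A,\varepsilon)}\}$,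 $\overline d^\circ_A(x)=\inf\{\varepsilon>0:x\in B_d(A,\varepsilon)\cup\mathrm{int}\,\overline{B_d(A,\varepsilon)}\}$; $d$ is $\overline{\mathsf{dist}}$-continuous if all $\overline d_A$ are continuous. Regularization $\overline d(x,y)=\overline d_{\{x\}}(y)$, semiregularization $\overline d^\circ(x,y)=\overline d^\circ_{\{x\}}(y)$. *)

theory Defs
  imports "HOL-Analysis.Analysis"
begin

definition topological_semigroup :: "('a::{semigroup_mult,topological_space}) itself \<Rightarrow> bool" where
  "topological_semigroup _ \<longleftrightarrow> continuous_on UNIV (\<lambda>p::'a \<times> 'a. fst p * snd p)"

definition is_nhd :: "'a::topological_space set \<Rightarrow> 'a \<Rightarrow> bool" where
  "is_nhd V x \<longleftrightarrow> (\<exists>W. open W \<and> x \<in> W \<and> W \<subseteq> V)"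

definition lmult_set :: "'a::times \<Rightarrow> 'a set \<Rightarrow> 'a set" where
  "lmult_set x V = (\<lambda>v. x * v) ` V"

definition rmult_set :: "'a set \<Rightarrow> 'a::times \<Rightarrow> 'a set" where
  "rmult_set V x = (\<lambda>v. v * x) ` V"

definition right_unit :: "'a::times \<Rightarrow> bool" where
  "right_unit e \<longleftrightarrow> (\<forall>x. x * e = x)"

definition open_right_unit :: "'a::{times,topological_space} \<Rightarrow> bool" where
  "open_right_unit e \<longleftrightarrow> right_unit e \<and>
     (\<forall>V x. is_nhd V e \<longrightarrow> is_nhd (lmult_set x V) x)"

definition balanced_point :: "'a::{times,topological_space} \<Rightarrow> bool" where
  "balanced_point e \<longleftrightarrow>
     (\<forall>U. is_nhd U e \<longrightarrow> (\<exists>V. open V \<and> e \<in> V \<and> V \<subseteq> U \<and>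
         (\<forall>x. lmult_set x V = rmult_set V x)))"

definition premetric :: "('a \<Rightarrow> 'a \<Rightarrow> real) \<Rightarrow> bool" where
  "premetric d \<longleftrightarrow> (\<forall>x y. 0 \<le> d x y) \<and> (\<forall>x. d x x = 0)"

definition quasi_pseudometric :: "('a \<Rightarrow> 'a \<Rightarrow> real) \<Rightarrow> bool" where
  "quasi_pseudometric d \<longleftrightarrow> premetric d \<and> (\<forall>x y z. d x z \<le> d x y + d y z)"

definition left_subinvariant :: "('a::times \<Rightarrow> 'a \<Rightarrow> real) \<Rightarrow> bool" where
  "left_subinvariant d \<longleftrightarrow> (\<forall>x y z. d (z * x) (z * y) \<le> d x y)"

definition right_subinvariant :: "('a::times \<Rightarrow> 'a \<Rightarrow> real) \<Rightarrow> bool" where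
  "right_subinvariant d \<longleftrightarrow> (\<forall>x y z. d (x * z) (y * z) \<le> d x y)"

definition subinvariant :: "('a::times \<Rightarrow> 'a \<Rightarrow> real) \<Rightarrow> bool" where
  "subinvariant d \<longleftrightarrow> left_subinvariant d \<and> right_subinvariant d"

definition dball :: "('a \<Rightarrow> 'a \<Rightarrow> real) \<Rightarrow> 'a \<Rightarrow> real \<Rightarrow> 'a set" where
  "dball d x \<epsilon> = {y. d x y < \<epsilon>}"

definition dball_set :: "('a \<Rightarrow> 'a \<Rightarrow> real) \<Rightarrow> 'a set \<Rightarrow> real \<Rightarrow> 'a set" where
  "dball_set d A \<epsilon> = (\<Union>a\<in>A. dball d a \<epsilon>)"

definition has_open_balls :: "('a::topological_space \<Rightarrow> 'a \<Rightarrow> real) \<Rightarrow> bool" where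
  "has_open_balls d \<longleftrightarrow> (\<forall>x \<epsilon>. open (dball d x \<epsilon>))"

definition right_continuous :: "('a::topological_space \<Rightarrow> 'a \<Rightarrow> real) \<Rightarrow> bool" where
  "right_continuous d \<longleftrightarrow> (\<forall>x. continuous_on UNIV (d x))"

definition dbar_dist :: "('a::topological_space \<Rightarrow> 'a \<Rightarrow> real) \<Rightarrow> 'a set \<Rightarrow> 'a \<Rightarrow> real" where
  "dbar_dist d A x = Inf {\<epsilon>. \<epsilon> > 0 \<and> x \<in> closure (dball_set d A \<epsilon>)}"

definition dbarcirc_dist :: "('a::topological_space \<Rightarrow> 'a \<Rightarrow> real) \<Rightarrow> 'a set \<Rightarrow> 'a \<Rightarrow> real" where
  "dbarcirc_dist d A x = Inf {\<epsilon>. \<epsilon> > 0 \<and>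
      x \<in> dball_set d A \<epsilon> \<union> interior (closure (dball_set d A \<epsilon>))}"

definition dist_continuous :: "('a::topological_space \<Rightarrow> 'a \<Rightarrow> real) \<Rightarrow> bool" where
  "dist_continuous d \<longleftrightarrow> (\<forall>A. A \<noteq> {} \<longrightarrow> continuous_on UNIV (dbar_dist d A))"

definition regularization :: "('a::topological_space \<Rightarrow> 'a \<Rightarrow> real) \<Rightarrow> 'a \<Rightarrow> 'a \<Rightarrow> real" where
  "regularization d x y = dbar_dist d {x} y"

definition semiregularization :: "('a::topological_space \<Rightarrow> 'a \<Rightarrow> real) \<Rightarrow> 'a \<Rightarrow> 'a \<Rightarrow> real" where
  "semiregularization d x y = dbarcirc_dist d {x} y"

end

theory Submission
  imports Defs
begin


definition infq :: "(real \<Rightarrow> 'a set) \<Rightarrow> 'a \<Rightarrow> real" where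
  "infq Q x = Inf {\<epsilon>. \<epsilon> > 0 \<and> x \<in> Q \<epsilon>}"

lemma infq_ge0: assumes "\<And>\<epsilon>. \<epsilon> > 1 \<Longrightarrow> x \<in> Q \<epsilon>" shows "0 \<le> infq Q x"
  unfolding infq_def
proof (rule cInf_greatest)
  show "{\<epsilon>. \<epsilon> > 0 \<and> x \<in> Q \<epsilon>} \<noteq> {}" using assms[of 2] by (auto intro!: exI[of _ 2])
qed auto

lemma infq_le: assumes "x \<in> Q \<epsilon>" "\<epsilon> > 0" shows "infq Q x \<le> \<epsilon>"
  unfolding infq_def
  by (rule cInf_lower) (use assms in \<open>auto intro!: bdd_belowI[of _ 0]\<close>)

lemma infq_lessD: assumes "infq Q x < c" "\<And>\<epsilon>. \<epsilon> > 1 \<Longrightarrow> x \<in> Q \<epsilon>"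
  shows "\<exists>\<epsilon>>0. \<epsilon> < c \<and> x \<in> Q \<epsilon>"
proof -
  have "{\<epsilon>. \<epsilon> > 0 \<and> x \<in> Q \<epsilon>} \<noteq> {}" using assms(2)[of 2] by (auto intro!: exI[of _ 2])
  from cInf_lessD[OF this] assms(1) show ?thesis unfolding infq_def by auto
qed

lemma infq_greatest: assumes "\<And>\<epsilon>. \<epsilon> > 0 \<Longrightarrow> x \<in> Q \<epsilon> \<Longrightarrow> c \<le> \<epsilon>"
   "\<And>\<epsilon>. \<epsilon> > 1 \<Longrightarrow> x \<in> Q \<epsilon>"
  shows "c \<le> infq Q x"
  unfolding infq_def
proof (rule cInf_greatest)
  show "{\<epsilon>. \<epsilon> > 0 \<and> x \<in> Q \<epsilon>} \<noteq> {}" using assms(2)[of 2] by (auto intro!: exI[of _ 2])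
qed (use assms in auto)

lemma infq_le1: assumes "\<And>\<epsilon>. \<epsilon> > 1 \<Longrightarrow> x \<in> Q \<epsilon>" shows "infq Q x \<le> 1"
proof (rule dense_ge)
  fix y :: real assume "1 < y" then show "infq Q x \<le> y" using assms infq_le by force
qed

lemma infq_mono: assumes "\<And>\<epsilon>. \<epsilon> > 0 \<Longrightarrow> y \<in> Q' \<epsilon> \<Longrightarrow> x \<in> Q \<epsilon>"
   "\<And>\<epsilon>. \<epsilon> > 1 \<Longrightarrow> y \<in> Q' \<epsilon>"
  shows "infq Q x \<le> infq Q' y"
  proof (rule infq_greatest)
  fix \<epsilon> :: real assume "\<epsilon> > 0" "y \<in> Q' \<epsilon>"
  then show "infq Q x \<le> \<epsilon>" using assms(1) infq_le by metis
qed (use assms in auto)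




definition TA :: "('a \<Rightarrow> real \<Rightarrow> 'a set) \<Rightarrow> 'a set \<Rightarrow> real \<Rightarrow> 'a set" where
  "TA T A \<epsilon> = (\<Union>a\<in>A. T a \<epsilon>)"

locale chainsys =
  fixes T :: "'a::{semigroup_mult,topological_space} \<Rightarrow> real \<Rightarrow> 'a set"
  assumes T_nonpos: "\<epsilon> \<le> 0 \<Longrightarrow> T x \<epsilon> = {}"
    and T_cen: "\<epsilon> > 0 \<Longrightarrow> x \<in> T x \<epsilon>"
    and T_full: "\<epsilon> > 1 \<Longrightarrow> y \<in> T x \<epsilon>"
    and T_mono: "\<epsilon> \<le> \<delta> \<Longrightarrow> T x \<epsilon> \<subseteq> T x \<delta>"
    and T_open: "y \<in> T x \<epsilon> \<Longrightarrow> \<exists>\<epsilon>'<\<epsilon>. y \<in> T x \<epsilon>'"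
    and T_trans: "y \<in> T x \<epsilon> \<Longrightarrow> z \<in> T y \<delta> \<Longrightarrow> z \<in> T x (\<epsilon>+\<delta>)"
    and T_left: "y \<in> T x \<epsilon> \<Longrightarrow> z*y \<in> T (z*x) \<epsilon>"
    and T_nhd: "\<epsilon> > 0 \<Longrightarrow> is_nhd (T x \<epsilon>) x"
    and T_cont: "z \<in> T y \<delta> \<Longrightarrow> \<exists>g. continuous_on UNIV g \<and> g y = z \<and> (\<forall>y'. g y' \<in> T y' \<delta>)"
    and lmult_cont: "continuous_on UNIV (\<lambda>y. z*y)"
    and rmult_cont: "continuous_on UNIV (\<lambda>y. y*z)"
begin

definition d :: "'a \<Rightarrow> 'a \<Rightarrow> real" where "d x y = infq (T x) y"

lemma T_pos: "y \<in> T x \<epsilon> \<Longrightarrow> \<epsilon> > 0"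
  by (metis T_nonpos empty_iff not_le)

lemma dball_eq: "dball d x \<epsilon> = T x \<epsilon>"
proof safe
  fix y assume "y \<in> dball d x \<epsilon>"
  then have "infq (T x) y < \<epsilon>" by (simp add: dball_def d_def)
  from infq_lessD[OF this] T_full obtain \<epsilon>' where "\<epsilon>' < \<epsilon>" "y \<in> T x \<epsilon>'" by blast
  then show "y \<in> T x \<epsilon>" using T_mono[of \<epsilon>' \<epsilon>] by auto
next
  fix y assume "y \<in> T x \<epsilon>"
  from T_open[OF this] obtain \<epsilon>' where "\<epsilon>' < \<epsilon>" "y \<in> T x \<epsilon>'" by blast
  moreover from this(2) have "\<epsilon>' > 0" by (rule T_pos)
  ultimately have "infq (T x) y < \<epsilon>" using infq_le[of y "T x" \<epsilon>'] by auto
  then show "y \<in> dball d x \<epsilon>" by (simp add: dball_def d_def)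
qed

lemma dball_set_eq: "dball_set d A \<epsilon> = TA T A \<epsilon>"
  by (simp add: dball_set_def TA_def dball_eq)

lemma T_isopen: "open (T x \<epsilon>)"
proof (subst open_subopen, intro ballI)
  fix y assume "y \<in> T x \<epsilon>"
  from T_open[OF this] obtain \<epsilon>' where e': "\<epsilon>' < \<epsilon>" "y \<in> T x \<epsilon>'" by blast
  have "is_nhd (T y (\<epsilon> - \<epsilon>')) y" using e' by (intro T_nhd) auto
  then obtain W where W: "open W" "y \<in> W" "W \<subseteq> T y (\<epsilon> - \<epsilon>')" by (auto simp: is_nhd_def)
  have "W \<subseteq> T x \<epsilon>" using W(3) T_trans[OF e'(2)] by fastforce
  then show "\<exists>T'. open T' \<and> y \<in> T' \<and> T' \<subseteq> T x \<epsilon>" using W by blast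
qed

lemma has_open_balls_d: "has_open_balls d"
  by (simp add: has_open_balls_def dball_eq T_isopen)

lemma d_ge0: "0 \<le> d x y" unfolding d_def by (rule infq_ge0) (rule T_full)
lemma d_le1: "d x y \<le> 1" unfolding d_def by (rule infq_le1) (rule T_full)

lemma d_lessD: "d x y < c \<Longrightarrow> \<exists>\<epsilon>>0. \<epsilon> < c \<and> y \<in> T x \<epsilon>"
  unfolding d_def by (rule infq_lessD) (auto intro: T_full)

lemma d_le: "y \<in> T x \<epsilon> \<Longrightarrow> d x y \<le> \<epsilon>"
  unfolding d_def using T_pos by (intro infq_le) auto

lemma d_xx: "d x x = 0"
proof -
  have "d x x \<le> \<epsilon>" if "\<epsilon> > 0" for \<epsilon> using d_le[OF T_cen[OF that]] .
  then have "d x x \<le> 0" by (rule dense_ge) 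
  then show ?thesis using d_ge0[of x x] by simp
qed

lemma d_tri: "d x z \<le> d x y + d y z"
proof (rule field_le_epsilon)
  fix t :: real assume t: "t > 0"
  obtain \<epsilon> where e: "\<epsilon> < d x y + t/2" "y \<in> T x \<epsilon>" using d_lessD[of x y "d x y + t/2"] t by auto
  obtain \<delta> where dd: "\<delta> < d y z + t/2" "z \<in> T y \<delta>" using d_lessD[of y z "d y z + t/2"] t by auto
  have "d x z \<le> \<epsilon> + \<delta>" by (rule d_le) (rule T_trans[OF e(2) dd(2)])
  then show "d x z \<le> d x y + d y z + t" using e dd by linarith
qed

lemma qpm_d: "quasi_pseudometric d"
  unfolding quasi_pseudometric_def premetric_def using d_ge0 d_xx d_tri by blast

lemma left_d: "left_subinvariant d"
  unfolding left_subinvariant_def d_def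
  by (intro allI infq_mono) (auto intro: T_left T_full)

lemma TA_mono: "\<epsilon> \<le> \<delta> \<Longrightarrow> TA T A \<epsilon> \<subseteq> TA T A \<delta>"
  unfolding TA_def using T_mono by blast

lemma TA_full: "A \<noteq> {} \<Longrightarrow> \<epsilon> > 1 \<Longrightarrow> y \<in> TA T A \<epsilon>"
  unfolding TA_def using T_full by blast

lemma closure_shift:
  assumes "y \<in> closure (TA T A \<epsilon>)" "z \<in> T y \<delta>"
  shows "z \<in> closure (TA T A (\<epsilon>+\<delta>))"
proof -
  obtain g where g: "continuous_on UNIV g" "g y = z" "\<And>y'. g y' \<in> T y' \<delta>"
    using T_cont[OF assms(2)] by blast
  have "g ` TA T A \<epsilon> \<subseteq> closure (TA T A (\<epsilon>+\<delta>))"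
    using g(3) T_trans unfolding TA_def by (fastforce intro: closure_subset[THEN subsetD])
  then have "g ` closure (TA T A \<epsilon>) \<subseteq> closure (TA T A (\<epsilon>+\<delta>))"
    by (intro image_closure_subset) (auto intro: continuous_on_subset[OF g(1)])
  then show ?thesis using assms(1) g(2) by blast
qed

definition dA :: "'a set \<Rightarrow> 'a \<Rightarrow> real" where
  "dA A = infq (\<lambda>\<epsilon>. closure (TA T A \<epsilon>))"

lemma dbar_eq: "dbar_dist d A = dA A"
  by (auto simp: dbar_dist_def dA_def infq_def dball_set_eq)

lemma dA_cont: assumes "A \<noteq> {}" shows "continuous_on UNIV (dA A)"
proof -
 have "(dA A \<longlongrightarrow> dA A x) (at x within UNIV)" for x
 proof -
  have full: "\<And>\<epsilon> y. \<epsilon> > 1 \<Longrightarrow> y \<in> closure (TA T A \<epsilon>)"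
    using TA_full[OF assms] closure_subset by blast
  have "(dA A \<longlongrightarrow> dA A x) (nhds x)"
  proof (rule order_tendstoI)
    fix a assume a: "a < dA A x"
    show "eventually (\<lambda>y. a < dA A y) (nhds x)"
    proof (cases "a < 0")
      case True
      have ge: "0 \<le> dA A y" for y unfolding dA_def by (rule infq_ge0) (rule full)
      have "\<forall>y. a < dA A y" using True ge by (meson less_le_trans)
      then show ?thesis by (rule always_eventually)
    next
      case False
      define c where "c = (a + dA A x)/2"
      have c: "a < c" "c < dA A x" "c > 0" using a False by (auto simp: c_def)
      have xn: "x \<notin> closure (TA T A c)"
        using infq_le[of x "\<lambda>\<epsilon>. closure (TA T A \<epsilon>)" c] c unfolding dA_def by auto
      show ?thesis unfolding eventually_nhds
      proof (intro exI conjI ballI)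
        show "open (- closure (TA T A c))" "x \<in> - closure (TA T A c)" using xn by auto
        fix y assume y: "y \<in> - closure (TA T A c)"
        have "c \<le> dA A y" unfolding dA_def
        proof (rule infq_greatest[OF _ full])
          fix \<epsilon> :: real assume "\<epsilon> > 0" "y \<in> closure (TA T A \<epsilon>)"
          then show "c \<le> \<epsilon>" using y closure_mono[OF TA_mono[of \<epsilon> c A]] by (cases "\<epsilon> \<le> c") auto
        qed
        then show "a < dA A y" using c by simp
      qed
    qed
  next
    fix a assume a: "dA A x < a"
    then obtain \<epsilon> where e: "\<epsilon> > 0" "\<epsilon> < a" "x \<in> closure (TA T A \<epsilon>)"
      using infq_lessD[of "\<lambda>\<epsilon>. closure (TA T A \<epsilon>)" x a] full unfolding dA_def by blast
    define \<delta> where "\<delta> = (a - \<epsilon>)/2"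
    have dpos: "\<delta> > 0" using e by (simp add: \<delta>_def)
    show "eventually (\<lambda>y. dA A y < a) (nhds x)" unfolding eventually_nhds
    proof (intro exI conjI ballI)
      show "open (T x \<delta>)" "x \<in> T x \<delta>" using T_isopen T_cen dpos by auto
      fix y assume "y \<in> T x \<delta>"
      then have "y \<in> closure (TA T A (\<epsilon>+\<delta>))" by (rule closure_shift[OF e(3)])
      then have "dA A y \<le> \<epsilon>+\<delta>" unfolding dA_def using e dpos by (intro infq_le) auto
      moreover have "\<epsilon> + \<delta> < a" unfolding \<delta>_def using e(2) by (simp add: field_simps)
      ultimately show "dA A y < a" by linarith
    qed
  qed
  moreover have "at x within UNIV \<le> nhds x" by (simp add: at_within_def)
  ultimately show ?thesis by (rule tendsto_mono[rotated])
 qed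
 then show ?thesis by (simp add: continuous_on_def)
qed

lemma distc_d: "dist_continuous d"
  unfolding dist_continuous_def dbar_eq using dA_cont by blast


lemma TA_single: "TA T {x} = T x" by (auto simp: TA_def fun_eq_iff)

definition r :: "'a \<Rightarrow> 'a \<Rightarrow> real" where "r x y = infq (\<lambda>\<epsilon>. closure (T x \<epsilon>)) y"

lemma reg_eq: "regularization d = r"
  by (auto simp: fun_eq_iff regularization_def dbar_eq dA_def r_def TA_single)

lemma r_full: "\<epsilon> > 1 \<Longrightarrow> y \<in> closure (T x \<epsilon>)"
  using T_full closure_subset by blast

lemma r_lessD: "r x y < c \<Longrightarrow> \<exists>\<epsilon>>0. \<epsilon> < c \<and> y \<in> closure (T x \<epsilon>)"
  unfolding r_def by (rule infq_lessD) (auto intro: r_full)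

lemma r_le: "y \<in> closure (T x \<epsilon>) \<Longrightarrow> \<epsilon> > 0 \<Longrightarrow> r x y \<le> \<epsilon>"
  unfolding r_def by (rule infq_le)

lemma r_ge0: "0 \<le> r x y" unfolding r_def by (rule infq_ge0) (rule r_full)

lemma closure_shift1:
  assumes "y \<in> closure (T x \<epsilon>)" "z \<in> T y \<delta>"
  shows "z \<in> closure (T x (\<epsilon>+\<delta>))"
  using closure_shift[of y "{x}" \<epsilon> z \<delta>] assms by (simp add: TA_single)

lemma r_le_d: "r x y \<le> d x y"
  unfolding r_def d_def
  by (rule infq_mono) (auto intro: closure_subset[THEN subsetD] T_full)

lemma semireg_eq: "semiregularization d = r"
proof -
  have "semiregularization d x y = r x y" for x y
  proof -
    have sr: "semiregularization d x y = infq (\<lambda>\<epsilon>. T x \<epsilon> \<union> interior (closure (T x \<epsilon>))) y"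
      by (simp add: semiregularization_def dbarcirc_dist_def infq_def dball_set_eq TA_single)
    have full: "\<epsilon> > 1 \<Longrightarrow> y \<in> T x \<epsilon> \<union> interior (closure (T x \<epsilon>))" for \<epsilon>
      using T_full by blast
    have "r x y \<le> semiregularization d x y" unfolding sr r_def
      by (rule infq_mono[OF _ full]) (meson Un_iff closure_subset interior_subset subsetD)
    moreover have "semiregularization d x y \<le> r x y" unfolding r_def
    proof (rule infq_greatest[OF _ r_full])
      fix \<epsilon> :: real assume e: "\<epsilon> > 0" "y \<in> closure (T x \<epsilon>)"
      show "semiregularization d x y \<le> \<epsilon>"
      proof (rule field_le_epsilon)
        fix t :: real assume t: "t > 0"
        have "T y t \<subseteq> closure (T x (\<epsilon>+t))" using closure_shift1[OF e(2)] by blast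
        then have "y \<in> interior (closure (T x (\<epsilon>+t)))"
          using T_isopen T_cen[OF t] by (meson interiorI)
        then show "semiregularization d x y \<le> \<epsilon> + t" unfolding sr
          using e t by (intro infq_le) auto
      qed
    qed
    ultimately show ?thesis by simp
  qed
  then show ?thesis by (auto simp: fun_eq_iff)
qed

lemma r_xx: "r x x = 0"
proof -
  have "r x x \<le> \<epsilon>" if "\<epsilon> > 0" for \<epsilon>
    using r_le[OF closure_subset[THEN subsetD, OF T_cen[OF that]] that] .
  then have "r x x \<le> 0" by (rule dense_ge)
  then show ?thesis using r_ge0[of x x] by simp
qed

lemma r_tri: "r x z \<le> r x y + r y z"
proof (rule field_le_epsilon)
  fix t :: real assume t: "t > 0"
  obtain \<epsilon> where e: "\<epsilon> > 0" "\<epsilon> < r x y + t/2" "y \<in> closure (T x \<epsilon>)"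
    using r_lessD[of x y "r x y + t/2"] t by auto
  obtain \<delta> where dd: "\<delta> > 0" "\<delta> < r y z + t/2" "z \<in> closure (T y \<delta>)"
    using r_lessD[of y z "r y z + t/2"] t by auto
  have "T y \<delta> \<subseteq> closure (T x (\<epsilon>+\<delta>))" using closure_shift1[OF e(3)] by blast
  then have "closure (T y \<delta>) \<subseteq> closure (T x (\<epsilon>+\<delta>))" by (simp add: closure_minimal)
  then have "r x z \<le> \<epsilon> + \<delta>" using dd e by (intro r_le) auto
  then show "r x z \<le> r x y + r y z + t" using e dd by linarith
qed

lemma qpm_r: "quasi_pseudometric r"
  unfolding quasi_pseudometric_def premetric_def using r_ge0 r_xx r_tri by blast

lemma left_r: "left_subinvariant r"
  unfolding left_subinvariant_def r_def
proof (intro allI infq_mono)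
  fix x y z and \<epsilon> :: real assume "y \<in> closure (T x \<epsilon>)"
  moreover have "(\<lambda>y. z*y) ` closure (T x \<epsilon>) \<subseteq> closure (T (z*x) \<epsilon>)"
    by (rule image_closure_subset) (auto intro: continuous_on_subset[OF lmult_cont] T_left closure_subset[THEN subsetD])
  ultimately show "z*y \<in> closure (T (z*x) \<epsilon>)" by blast
qed (rule r_full)

lemma rc_r: "right_continuous r"
  unfolding right_continuous_def
proof
  fix x show "continuous_on UNIV (r x)"
    using dA_cont[of "{x}"] by (simp add: dA_def r_def TA_single)
qed

lemma distc_r: "dist_continuous r"
  unfolding dist_continuous_def
proof (intro allI impI)
  fix A :: "'a set" assume A: "A \<noteq> {}"
  have "closure (dball_set r A \<epsilon>) = closure (TA T A \<epsilon>)" for \<epsilon>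
  proof (rule antisym)
    have "dball_set r A \<epsilon> \<subseteq> closure (TA T A \<epsilon>)"
    proof
      fix y assume "y \<in> dball_set r A \<epsilon>"
      then obtain a where a: "a \<in> A" "r a y < \<epsilon>" by (auto simp: dball_set_def dball_def)
      then obtain \<epsilon>' where "\<epsilon>' < \<epsilon>" "y \<in> closure (T a \<epsilon>')" using r_lessD by blast
      moreover have "closure (T a \<epsilon>') \<subseteq> closure (TA T A \<epsilon>)"
        using \<open>\<epsilon>' < \<epsilon>\<close> a(1) T_mono[of \<epsilon>' \<epsilon> a] by (intro closure_mono) (auto simp: TA_def)
      ultimately show "y \<in> closure (TA T A \<epsilon>)" by blast
    qed
    then show "closure (dball_set r A \<epsilon>) \<subseteq> closure (TA T A \<epsilon>)" by (simp add: closure_minimal)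
    have "TA T A \<epsilon> \<subseteq> dball_set r A \<epsilon>"
    proof
      fix y assume "y \<in> TA T A \<epsilon>"
      then obtain a where "a \<in> A" "y \<in> T a \<epsilon>" by (auto simp: TA_def)
      then have "d a y < \<epsilon>" using dball_eq by (auto simp: dball_def)
      then have "r a y < \<epsilon>" using r_le_d[of a y] by linarith
      then show "y \<in> dball_set r A \<epsilon>" using \<open>a \<in> A\<close> by (auto simp: dball_set_def dball_def)
    qed
    then show "closure (TA T A \<epsilon>) \<subseteq> closure (dball_set r A \<epsilon>)" by (rule closure_mono)
  qed
  then have "dbar_dist r A = dA A" by (simp add: dbar_dist_def dA_def infq_def fun_eq_iff)
  then show "continuous_on UNIV (dbar_dist r A)" using dA_cont[OF A] by simp
qed

lemma ball_r: "dball r x 1 \<subseteq> interior (closure (T x 1))"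
proof
  fix y assume "y \<in> dball r x 1"
  then obtain \<epsilon> where e: "\<epsilon> > 0" "\<epsilon> < 1" "y \<in> closure (T x \<epsilon>)"
    using r_lessD[of x y 1] by (auto simp: dball_def)
  have "T y (1 - \<epsilon>) \<subseteq> closure (T x (\<epsilon> + (1-\<epsilon>)))" using closure_shift1[OF e(3)] by blast
  then have "T y (1 - \<epsilon>) \<subseteq> closure (T x 1)" by simp
  then show "y \<in> interior (closure (T x 1))"
    using T_isopen T_cen[of "1-\<epsilon>" y] e by (meson diff_gt_0_iff_gt interiorI)
qed

lemma right_inv:
  assumes "\<And>x y z \<epsilon>. y \<in> T x \<epsilon> \<Longrightarrow> y*z \<in> T (x*z) \<epsilon>"
  shows "subinvariant d \<and> subinvariant r"
proof -
  have "right_subinvariant d"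
    unfolding right_subinvariant_def d_def
    by (intro allI infq_mono) (auto intro: assms T_full)
  moreover have "right_subinvariant r"
    unfolding right_subinvariant_def r_def
  proof (intro allI infq_mono)
    fix x y z and \<epsilon> :: real assume "x \<in> closure (T y \<epsilon>)"
    moreover have "(\<lambda>y. y*z) ` closure (T y \<epsilon>) \<subseteq> closure (T (y*z) \<epsilon>)"
      by (rule image_closure_subset) (auto intro: continuous_on_subset[OF rmult_cont] assms closure_subset[THEN subsetD])
    ultimately show "x*z \<in> closure (T (y*z) \<epsilon>)" by blast
  qed (rule r_full)
  ultimately show ?thesis using left_d left_r by (simp add: subinvariant_def)
qed

end



lemma ts_lmult: assumes "topological_semigroup TYPE('a::{semigroup_mult,topological_space})"
  shows "continuous_on UNIV (\<lambda>y::'a. z*y)"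
proof -
  have c: "continuous_on UNIV (\<lambda>p::'a \<times> 'a. fst p * snd p)" using assms by (simp add: topological_semigroup_def)
  have "continuous_on UNIV (\<lambda>y::'a. (z, y))" by (intro continuous_intros)
  from continuous_on_compose[OF this continuous_on_subset[OF c]] show ?thesis by (simp add: o_def)
qed

lemma ts_rmult: assumes "topological_semigroup TYPE('a::{semigroup_mult,topological_space})"
  shows "continuous_on UNIV (\<lambda>y::'a. y*z)"
proof -
  have c: "continuous_on UNIV (\<lambda>p::'a \<times> 'a. fst p * snd p)" using assms by (simp add: topological_semigroup_def)
  have "continuous_on UNIV (\<lambda>y::'a. (y, z))" by (intro continuous_intros)
  from continuous_on_compose[OF this continuous_on_subset[OF c]] show ?thesis by (simp add: o_def)
qed

lemma ts_pair:
  fixes e :: "'a::{semigroup_mult,topological_space}"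
  assumes "topological_semigroup TYPE('a)" "e*e = e" "open Q" "e \<in> Q"
  shows "\<exists>P. open P \<and> e \<in> P \<and> (\<forall>a\<in>P. \<forall>b\<in>P. a*b \<in> Q)"
proof -
  have c: "continuous_on UNIV (\<lambda>p::'a \<times> 'a. fst p * snd p)" using assms by (simp add: topological_semigroup_def)
  have "open ((\<lambda>p::'a \<times> 'a. fst p * snd p) -` Q)"
    using c assms(3) continuous_on_open_vimage[of UNIV] by auto
  moreover have "(e,e) \<in> (\<lambda>p::'a \<times> 'a. fst p * snd p) -` Q" using assms by simp
  ultimately obtain A B where AB: "open A" "open B" "(e,e) \<in> A \<times> B" "A \<times> B \<subseteq> (\<lambda>p::'a \<times> 'a. fst p * snd p) -` Q"
    by (rule open_prod_elim)
  have "\<forall>a\<in>A \<inter> B. \<forall>b\<in>A \<inter> B. a*b \<in> Q"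
  proof (intro ballI)
    fix a b assume "a \<in> A \<inter> B" "b \<in> A \<inter> B"
    then have "(a,b) \<in> A \<times> B" by simp
    then show "a*b \<in> Q" using AB(4) by (metis (no_types, lifting) fst_conv snd_conv subsetD vimageE)
  qed
  then show ?thesis using AB(1,2,3) by (intro exI[of _ "A \<inter> B"]) auto
qed

lemma ts_shrink:
  fixes e :: "'a::{semigroup_mult,topological_space}"
  assumes "topological_semigroup TYPE('a)" "right_unit e" "open Q" "e \<in> Q"
  shows "\<exists>P. open P \<and> e \<in> P \<and> (\<forall>a\<in>P. \<forall>b\<in>P. \<forall>c\<in>P. a*b*c \<in> Q) \<and>
     (balanced_point e \<longrightarrow> (\<forall>x. lmult_set x P = rmult_set P x))"
proof -
  have ee: "e*e = e" using assms(2) by (simp add: right_unit_def)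
  obtain P1 where P1: "open P1" "e \<in> P1" "\<forall>a\<in>P1. \<forall>b\<in>P1. a*b \<in> Q" using ts_pair[OF assms(1) ee assms(3,4)] by blast
  obtain P2 where P2: "open P2" "e \<in> P2" "\<forall>a\<in>P2. \<forall>b\<in>P2. a*b \<in> P1" using ts_pair[OF assms(1) ee P1(1,2)] by blast
  define P where "P = P1 \<inter> P2"
  have P: "open P" "e \<in> P" "\<forall>a\<in>P. \<forall>b\<in>P. \<forall>c\<in>P. a*b*c \<in> Q"
    unfolding P_def using P1 P2 by (simp_all add: open_Int)
  show ?thesis
  proof (cases "balanced_point e")
    case True
    have "is_nhd P e" using P by (auto simp: is_nhd_def)
    then obtain V where V: "open V" "e \<in> V" "V \<subseteq> P" "\<forall>x. lmult_set x V = rmult_set V x"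
      using True[unfolded balanced_point_def, rule_format, OF \<open>is_nhd P e\<close>] by blast
    have "\<forall>a\<in>V. \<forall>b\<in>V. \<forall>c\<in>V. a*b*c \<in> Q" using V(3) P(3) by (meson subsetD)
    then show ?thesis using V(1,2,4) by (intro exI[of _ V]) simp
  next
    case False
    then show ?thesis using P by (intro exI[of _ P]) simp
  qed
qed


definition Nstep :: "'a::{semigroup_mult,topological_space} \<Rightarrow> 'a set \<Rightarrow> 'a set" where
  "Nstep e Q = (SOME P. open P \<and> e \<in> P \<and> (\<forall>a\<in>P. \<forall>b\<in>P. \<forall>c\<in>P. a*b*c \<in> Q) \<and>
     (balanced_point e \<longrightarrow> (\<forall>x. lmult_set x P = rmult_set P x)))"

lemma Nstep:
  fixes e :: "'a::{semigroup_mult,topological_space}"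
  assumes "topological_semigroup TYPE('a)" "right_unit e" "open Q" "e \<in> Q"
  shows "open (Nstep e Q) \<and> e \<in> Nstep e Q \<and> (\<forall>a\<in>Nstep e Q. \<forall>b\<in>Nstep e Q. \<forall>c\<in>Nstep e Q. a*b*c \<in> Q) \<and>
     (balanced_point e \<longrightarrow> (\<forall>x. lmult_set x (Nstep e Q) = rmult_set (Nstep e Q) x))"
  unfolding Nstep_def by (rule someI_ex) (rule ts_shrink[OF assms])

primrec Nseq :: "'a::{semigroup_mult,topological_space} \<Rightarrow> 'a set \<Rightarrow> nat \<Rightarrow> 'a set" where
  "Nseq e U 0 = Nstep e U"
| "Nseq e U (Suc n) = Nstep e (Nseq e U n)"

definition validc :: "(nat \<Rightarrow> 'a set) \<Rightarrow> (nat \<times> 'a) list \<Rightarrow> bool" where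
  "validc N cs \<longleftrightarrow> (\<forall>c\<in>set cs. snd c \<in> N (fst c))"

definition wt :: "(nat \<times> 'a) list \<Rightarrow> real" where
  "wt cs = sum_list (map (\<lambda>c. (1/2::real)^(fst c)) cs)"

definition fp :: "'a::times \<Rightarrow> (nat \<times> 'a) list \<Rightarrow> 'a" where
  "fp x cs = foldl (\<lambda>y c. y * snd c) x cs"

definition Tc :: "(nat \<Rightarrow> 'a set) \<Rightarrow> 'a::times \<Rightarrow> real \<Rightarrow> 'a set" where
  "Tc N x \<epsilon> = {y. 1 < \<epsilon> \<or> (\<exists>cs. validc N cs \<and> wt cs < \<epsilon> \<and> y = fp x cs)}"

lemma wt_nil[simp]: "wt [] = 0" by (simp add: wt_def)
lemma wt_cons[simp]: "wt (c#cs) = (1/2)^(fst c) + wt cs" by (simp add: wt_def)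
lemma wt_append[simp]: "wt (cs@ds) = wt cs + wt ds" by (simp add: wt_def)
lemma wt_ge0: "0 \<le> wt cs" unfolding wt_def by (induction cs) auto
lemma fp_nil[simp]: "fp x [] = x" by (simp add: fp_def)
lemma fp_cons[simp]: "fp x (c#cs) = fp (x * snd c) cs" by (simp add: fp_def)
lemma fp_append[simp]: "fp x (cs@ds) = fp (fp x cs) ds" by (simp add: fp_def)
lemma validc_nil[simp]: "validc N []" by (simp add: validc_def)
lemma validc_cons[simp]: "validc N (c#cs) \<longleftrightarrow> snd c \<in> N (fst c) \<and> validc N cs" by (simp add: validc_def)
lemma validc_append[simp]: "validc N (cs@ds) \<longleftrightarrow> validc N cs \<and> validc N ds" by (auto simp: validc_def)

lemma fp_left: "fp (z*x) cs = z * fp (x::'a::semigroup_mult) cs"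
  by (induction cs arbitrary: x) (auto simp: mult.assoc)

lemma fp_cont: assumes "topological_semigroup TYPE('a::{semigroup_mult,topological_space})"
  shows "continuous_on UNIV (\<lambda>y::'a. fp y cs)"
proof (induction cs)
  case Nil then show ?case by (simp add: continuous_on_id)
next
  case (Cons c cs)
  from continuous_on_compose[OF ts_rmult[OF assms, of "snd c"] continuous_on_subset[OF Cons]]
  show ?case by (simp add: o_def)
qed

lemma split_chain:
  "cs \<noteq> [] \<Longrightarrow> 0 \<le> a \<Longrightarrow> a < h \<Longrightarrow> a + wt cs < 2*h \<Longrightarrow>
    \<exists>pre c suf. cs = pre @ c # suf \<and> a + wt pre < h \<and> wt suf < h"
proof (induction cs arbitrary: a)
  case Nil then show ?case by simp
next
  case (Cons c cs)
  show ?case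
  proof (cases "h \<le> a + (1/2)^(fst c)")
    case True
    then show ?thesis using Cons.prems by (intro exI[of _ "[]"] exI[of _ c] exI[of _ cs]) auto
  next
    case False
    show ?thesis
    proof (cases "cs = []")
      case True
      then show ?thesis using Cons.prems by (intro exI[of _ "[]"] exI[of _ c] exI[of _ cs]) auto
    next
      case cs: False
      have "0 \<le> a + (1/2)^(fst c)" using Cons.prems by simp
      from Cons.IH[OF cs this] False Cons.prems obtain pre c' suf where
        "cs = pre @ c' # suf" "a + (1/2)^(fst c) + wt pre < h" "wt suf < h"
        by (auto simp: add.assoc)
      then show ?thesis by (intro exI[of _ "c#pre"] exI[of _ c'] exI[of _ suf]) (auto simp: add.assoc)
    qed
  qed
qed

locale Nsys =
  fixes e :: "'a::{semigroup_mult,topological_space}" and N :: "nat \<Rightarrow> 'a set" and U :: "'a set"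
  assumes ru: "right_unit e"
    and N_e: "e \<in> N n"
    and N_open: "open (N n)"
    and N_triple: "a \<in> N (Suc n) \<Longrightarrow> b \<in> N (Suc n) \<Longrightarrow> c \<in> N (Suc n) \<Longrightarrow> a*b*c \<in> N n"
    and N_U: "N 0 \<subseteq> U"
begin

lemma xe: "x * e = x" using ru by (simp add: right_unit_def)

lemma N_Suc: "N (Suc n) \<subseteq> N n"
proof
  fix a assume "a \<in> N (Suc n)"
  then have "a*e*e \<in> N n" using N_triple N_e by blast
  then show "a \<in> N n" by (simp add: xe)
qed

lemma N_anti: "m \<le> k \<Longrightarrow> N k \<subseteq> N m"
  by (induction k rule: dec_induct) (use N_Suc in auto)

lemma chain_lemma: "validc N cs \<Longrightarrow> wt cs < (1/2)^n \<Longrightarrow> fp x cs \<in> lmult_set x (N n)"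
proof (induction "length cs" arbitrary: cs n x rule: less_induct)
  case less
  show ?case
  proof (cases "cs = []")
    case True
    then show ?thesis using N_e[of n] by (auto simp: lmult_set_def xe intro!: image_eqI[of _ _ e])
  next
    case False
    have h: "(0::real) < (1/2)^(Suc n)" by simp
    have "0 + wt cs < 2 * (1/2)^(Suc n)" using less.prems by simp
    from split_chain[OF False order_refl h this] obtain pre c suf where
      sp: "cs = pre @ c # suf" "wt pre < (1/2)^(Suc n)" "wt suf < (1/2)^(Suc n)" by auto
    have v: "validc N pre" "snd c \<in> N (fst c)" "validc N suf" using less.prems(1) sp(1) by auto
    have "fp x pre \<in> lmult_set x (N (Suc n))"
      using less.hyps[of pre "Suc n" x] sp v by simp
    then obtain a where a: "a \<in> N (Suc n)" "fp x pre = x * a" by (auto simp: lmult_set_def)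
    have "fp (fp x pre * snd c) suf \<in> lmult_set (fp x pre * snd c) (N (Suc n))"
      using less.hyps[of suf "Suc n" "fp x pre * snd c"] sp v by simp
    then obtain b where b: "b \<in> N (Suc n)" "fp (fp x pre * snd c) suf = (fp x pre * snd c) * b"
      by (auto simp: lmult_set_def)
    have "(1/2::real)^(fst c) \<le> wt cs" using sp(1) wt_ge0[of pre] wt_ge0[of suf] by simp
    then have "(1/2::real)^(fst c) < (1/2)^n" using less.prems(2) by linarith
    then have "n < fst c" by simp
    then have u: "snd c \<in> N (Suc n)" using v(2) N_anti[of "Suc n" "fst c"] by auto
    have "fp x cs = x * (a * snd c * b)" using sp(1) a b by (simp add: mult.assoc)
    moreover have "a * snd c * b \<in> N n" using N_triple a(1) u b(1) by blast
    ultimately show ?thesis by (auto simp: lmult_set_def)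
  qed
qed

lemma T8: "Tc N x 1 \<subseteq> lmult_set x U"
proof
  fix y assume "y \<in> Tc N x 1"
  then obtain cs where "validc N cs" "wt cs < (1/2)^0" "y = fp x cs" by (auto simp: Tc_def)
  then have "y \<in> lmult_set x (N 0)" using chain_lemma by blast
  then show "y \<in> lmult_set x U" using N_U by (auto simp: lmult_set_def)
qed

lemma right_inv_chain:
  assumes bal: "\<And>k x. lmult_set x (N k) = rmult_set (N k) x"
  shows "validc N cs \<Longrightarrow> \<exists>cs'. validc N cs' \<and> wt cs' = wt cs \<and> fp x cs * z = fp (x*z) cs'"
proof (induction cs arbitrary: z rule: rev_induct)
  case Nil then show ?case by (intro exI[of _ "[]"]) simp
next
  case (snoc c cs)
  have "snd c * z \<in> rmult_set (N (fst c)) z" using snoc.prems by (auto simp: rmult_set_def)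
  then have "snd c * z \<in> lmult_set z (N (fst c))" using bal by simp
  then obtain u' where u': "u' \<in> N (fst c)" "snd c * z = z * u'" by (auto simp: lmult_set_def)
  obtain cs' where cs': "validc N cs'" "wt cs' = wt cs" "fp x cs * z = fp (x*z) cs'"
    using snoc by auto
  have "fp x (cs @ [c]) * z = fp x cs * (snd c * z)" by (simp add: mult.assoc)
  also have "\<dots> = (fp x cs * z) * u'" by (simp add: u'(2) mult.assoc)
  also have "\<dots> = fp (x*z) (cs' @ [(fst c, u')])" using cs'(3) by simp
  finally show ?case using cs' u' by (intro exI[of _ "cs' @ [(fst c, u')]"]) simp
qed

end




lemma Tc_chainsys:
  fixes e :: "'a::{semigroup_mult,topological_space}"
  assumes ts: "topological_semigroup TYPE('a)" and oru: "open_right_unit e" and ns: "Nsys e N U"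
  shows "chainsys (Tc N)"
proof
  fix \<epsilon> :: real and x :: 'a
  assume a: "\<epsilon> \<le> 0"
  have "\<not>(wt cs < \<epsilon>)" for cs :: "(nat \<times> 'a) list" using wt_ge0[of cs] a by linarith
  then show "Tc N x \<epsilon> = {}" using a by (auto simp: Tc_def)
next
  fix \<epsilon> :: real and x :: 'a
  assume "\<epsilon> > 0" then show "x \<in> Tc N x \<epsilon>"
    by (auto simp: Tc_def intro!: exI[of _ "[]"])
next
  fix \<epsilon> :: real and x y :: 'a
  assume "\<epsilon> > 1" then show "y \<in> Tc N x \<epsilon>" by (simp add: Tc_def)
next
  fix \<epsilon> \<delta> :: real and x :: 'a
  assume "\<epsilon> \<le> \<delta>" then show "Tc N x \<epsilon> \<subseteq> Tc N x \<delta>" by (force simp: Tc_def)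
next
  fix \<epsilon> :: real and x y :: 'a
  assume "y \<in> Tc N x \<epsilon>"
  then consider "1 < \<epsilon>" | cs where "validc N cs" "wt cs < \<epsilon>" "y = fp x cs" by (auto simp: Tc_def)
  then show "\<exists>\<epsilon>'<\<epsilon>. y \<in> Tc N x \<epsilon>'"
  proof cases
    case 1 then show ?thesis by (intro exI[of _ "(1+\<epsilon>)/2"]) (auto simp: Tc_def)
  next
    case 2 then show ?thesis by (intro exI[of _ "(wt cs+\<epsilon>)/2"]) (auto simp: Tc_def)
  qed
next
  fix \<epsilon> \<delta> :: real and x y z :: 'a
  assume y: "y \<in> Tc N x \<epsilon>" and z: "z \<in> Tc N y \<delta>"
  have pe: "\<epsilon> > 0" using y wt_ge0 unfolding Tc_def by (smt (verit) mem_Collect_eq)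
  have pd: "\<delta> > 0" using z wt_ge0 unfolding Tc_def by (smt (verit) mem_Collect_eq)
  show "z \<in> Tc N x (\<epsilon>+\<delta>)"
  proof (cases "1 < \<epsilon> \<or> 1 < \<delta>")
    case True then show ?thesis using pe pd by (auto simp: Tc_def)
  next
    case False
    then obtain cs ds where "validc N cs" "wt cs < \<epsilon>" "y = fp x cs" "validc N ds" "wt ds < \<delta>" "z = fp y ds"
      using y z by (auto simp: Tc_def)
    then show ?thesis by (auto simp: Tc_def intro!: exI[of _ "cs@ds"])
  qed
next
  fix \<epsilon> :: real and x y z :: 'a
  assume "y \<in> Tc N x \<epsilon>"
  then show "z*y \<in> Tc N (z*x) \<epsilon>" by (auto simp: Tc_def fp_left)
next
  fix \<epsilon> :: real and x :: 'a
  assume e: "\<epsilon> > 0"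
  obtain k where k: "(1/2::real)^k < \<epsilon>" using real_arch_pow_inv[OF e, of "1/2"] by auto
  have "is_nhd (N k) e" using Nsys.N_open[OF ns] Nsys.N_e[OF ns] by (auto simp: is_nhd_def)
  then have "is_nhd (lmult_set x (N k)) x" using oru by (simp add: open_right_unit_def)
  moreover have "lmult_set x (N k) \<subseteq> Tc N x \<epsilon>"
  proof
    fix y assume "y \<in> lmult_set x (N k)"
    then obtain u where "u \<in> N k" "y = x*u" by (auto simp: lmult_set_def)
    then show "y \<in> Tc N x \<epsilon>" using k by (auto simp: Tc_def intro!: exI[of _ "[(k,u)]"])
  qed
  ultimately show "is_nhd (Tc N x \<epsilon>) x" by (auto simp: is_nhd_def)
next
  fix z y :: 'a and \<delta> :: real
  assume "z \<in> Tc N y \<delta>"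
  then consider "1 < \<delta>" | cs where "validc N cs" "wt cs < \<delta>" "z = fp y cs" by (auto simp: Tc_def)
  then show "\<exists>g. continuous_on UNIV g \<and> g y = z \<and> (\<forall>y'. g y' \<in> Tc N y' \<delta>)"
  proof cases
    case 1 then show ?thesis by (intro exI[of _ "\<lambda>_. z"]) (auto simp: Tc_def continuous_on_const)
  next
    case 2 then show ?thesis using fp_cont[OF ts] by (intro exI[of _ "\<lambda>y'. fp y' cs"]) (auto simp: Tc_def)
  qed
next
  fix z :: 'a show "continuous_on UNIV (\<lambda>y. z*y)" by (rule ts_lmult[OF ts])
next
  fix z :: 'a show "continuous_on UNIV (\<lambda>y. y*z)" by (rule ts_rmult[OF ts])
qed


lemma Nseq_sys:
  fixes e :: "'a::{semigroup_mult,topological_space}"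
  assumes ts: "topological_semigroup TYPE('a)" and oru: "open_right_unit e" and U: "open U" "e \<in> U"
  shows "Nsys e (Nseq e U) U"
    and "balanced_point e \<Longrightarrow> lmult_set x (Nseq e U k) = rmult_set (Nseq e U k) x"
proof -
  have ru: "right_unit e" using oru by (simp add: open_right_unit_def)
  have oe: "open (Nseq e U n) \<and> e \<in> Nseq e U n" for n
    by (induction n) (use Nstep[OF ts ru] U in auto)
  have "\<forall>a\<in>Nseq e U (Suc n). \<forall>b\<in>Nseq e U (Suc n). \<forall>c\<in>Nseq e U (Suc n). a*b*c \<in> Nseq e U n" for n
    using Nstep[OF ts ru, of "Nseq e U n"] oe[of n] by simp
  moreover have "Nseq e U 0 \<subseteq> U"
  proof
    fix a assume "a \<in> Nseq e U 0"
    then have "a*e*e \<in> U" using Nstep[OF ts ru U] by simp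
    then show "a \<in> U" using ru by (simp add: right_unit_def)
  qed
  ultimately show "Nsys e (Nseq e U) U" using oe ru by unfold_locales auto
  assume b: "balanced_point e"
  show "lmult_set x (Nseq e U k) = rmult_set (Nseq e U k) x"
  proof (cases k)
    case 0 then show ?thesis using Nstep[OF ts ru U] b by simp
  next
    case (Suc m) then show ?thesis using Nstep[OF ts ru, of "Nseq e U m"] oe[of m] b by simp
  qed
qed

theorem theorem6p1:
  fixes e :: "'a::{semigroup_mult,topological_space}"
  assumes "topological_semigroup TYPE('a)"
    and "open_right_unit e"
    and "open U" and "e \<in> U"
  shows "\<exists>d :: 'a \<Rightarrow> 'a \<Rightarrow> real.
     premetric d \<and> (\<forall>x y. 0 \<le> d x y \<and> d x y \<le> 1) \<and>
     regularization d = semiregularization d \<and>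
     (\<forall>x y. regularization d x y \<le> d x y) \<and>
     (quasi_pseudometric d \<and> left_subinvariant d \<and> dist_continuous d \<and> has_open_balls d) \<and>
     (quasi_pseudometric (regularization d) \<and> left_subinvariant (regularization d) \<and>
        right_continuous (regularization d) \<and> dist_continuous (regularization d)) \<and>
     (\<forall>x. dball d x 1 \<subseteq> lmult_set x U \<and>
          dball (regularization d) x 1 \<subseteq> interior (closure (lmult_set x U))) \<and>
     (balanced_point e \<longrightarrow> subinvariant d \<and> subinvariant (regularization d))"
proof -
  define N where "N = Nseq e U"
  have ns: "Nsys e N U" unfolding N_def by (rule Nseq_sys(1)[OF assms])
  have bal: "balanced_point e \<Longrightarrow> lmult_set x (N k) = rmult_set (N k) x" for x k
    unfolding N_def by (rule Nseq_sys(2)[OF assms])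
  interpret cs: chainsys "Tc N" by (rule Tc_chainsys[OF assms(1,2) ns])
  have qpm: "quasi_pseudometric cs.d" by (rule cs.qpm_d)
  have balls: "dball cs.d x 1 \<subseteq> lmult_set x U \<and>
          dball (regularization cs.d) x 1 \<subseteq> interior (closure (lmult_set x U))" for x
  proof
    show "dball cs.d x 1 \<subseteq> lmult_set x U" using Nsys.T8[OF ns] cs.dball_eq by simp
    have "interior (closure (Tc N x 1)) \<subseteq> interior (closure (lmult_set x U))"
      using Nsys.T8[OF ns] by (intro interior_mono closure_mono)
    then show "dball (regularization cs.d) x 1 \<subseteq> interior (closure (lmult_set x U))"
      using cs.ball_r cs.reg_eq by auto
  qed
  have binv: "balanced_point e \<Longrightarrow> subinvariant cs.d \<and> subinvariant (regularization cs.d)"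
  proof -
    assume b: "balanced_point e"
    have "y * z \<in> Tc N (x * z) \<epsilon>" if yin: "y \<in> Tc N x \<epsilon>" for x y z \<epsilon>
    proof (cases "1 < \<epsilon>")
      case True then show ?thesis by (simp add: Tc_def)
    next
      case False
      then obtain cs where c: "validc N cs" "wt cs < \<epsilon>" "y = fp x cs" using yin False by (auto simp: Tc_def)
      obtain cs' where "validc N cs'" "wt cs' = wt cs" "fp x cs * z = fp (x*z) cs'"
        using Nsys.right_inv_chain[OF ns bal[OF b] c(1)] by blast
      then show ?thesis using c by (auto simp: Tc_def)
    qed
    then show ?thesis using cs.right_inv cs.reg_eq by simp
  qed
  show ?thesis
    apply (rule exI[of _ cs.d])
    using qpm cs.d_ge0 cs.d_le1 cs.reg_eq cs.semireg_eq cs.r_le_d cs.left_d cs.distc_d cs.has_open_balls_d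
      cs.qpm_r cs.left_r cs.rc_r cs.distc_r balls binv
    by (simp add: quasi_pseudometric_def)
qed


end
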